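(* Let $(G,\lambda)$ be a finite abelian $2$-group with a nonsingular symmetric linking pairing, let $k\ge1$, and assume the layer form $b_k$ is alternating. Define $q_k:H_k(G)\to\mathbb Q/\mathbb Z$ by $q_k(\bar x)=2^{k-1}\lambda(x,x)$ for $x\in G$ representing $\bar x\in H_k(G)=G/G_k$. Then $q_k$ is well-defined and satisfies $q_k(\bar x+\bar y)-q_k(\bar x)-q_k(\bar y)=2^k\lambda(x,y)\in\mathbb Q/\mathbb Z$ for all $\bar x,\bar y\in H_k(G)$.
   Context: A linking pairing is a symmetric bilinear map $\lambda:G\times G\to\mathbb Q/\mathbb Z$, nonsingular if its adjoint $G\to\mathrm{Hom}(G,\mathbb Q/\mathbb Z)$ is an isomorphism. $G_k=\{x\in G:2^kx=0\}$, $G_0=0$, $P_k(G)=G_k/(G_{k-1}+2G_{k+1})$, and $b_k(\bar x,\bar y)=2^k\lambda(x,y)\bmod2$ is the induced $\mathbb F_2$-form on $P_k(G)$; alternating means $b_k(v,v)=0$ for all $v$ (this is the "Type E" case). *)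

theory Defs
  imports Main "HOL-Library.Quotient_Type" Complex_Main
begin

definition qz_rel :: "rat \<Rightarrow> rat \<Rightarrow> bool" where
  "qz_rel x y \<longleftrightarrow> x - y \<in> \<int>"

lemma equivp_qz_rel: "equivp qz_rel"
proof (rule equivpI)
  show "reflp qz_rel" by (auto simp: reflp_def qz_rel_def)
  show "symp qz_rel" unfolding symp_def qz_rel_def
  proof (intro allI impI)
    fix x y :: rat assume "x - y \<in> \<int>"
    then have "- (x - y) \<in> \<int>" by (rule Ints_minus)
    then show "y - x \<in> \<int>" by simp
  qed
  show "transp qz_rel" unfolding transp_def qz_rel_def
  proof (intro allI impI)
    fix x y z :: rat assume "x - y \<in> \<int>" "y - z \<in> \<int>"
    then have "(x - y) + (y - z) \<in> \<int>" by (rule Ints_add)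
    then show "x - z \<in> \<int>" by simp
  qed
qed

quotient_type qz = rat / qz_rel
  by (rule equivp_qz_rel)

instantiation qz :: ab_group_add
begin
lift_definition zero_qz :: qz is "0" .
lift_definition plus_qz :: "qz \<Rightarrow> qz \<Rightarrow> qz" is "(+)"
  unfolding qz_rel_def
proof -
  fix a b c d :: rat assume "a - b \<in> \<int>" "c - d \<in> \<int>"
  then have "(a - b) + (c - d) \<in> \<int>" by (rule Ints_add)
  then show "a + c - (b + d) \<in> \<int>" by (simp add: algebra_simps)
qed
lift_definition uminus_qz :: "qz \<Rightarrow> qz" is "uminus"
  unfolding qz_rel_def
proof -
  fix a b :: rat assume "a - b \<in> \<int>"
  then have "- (a - b) \<in> \<int>" by (rule Ints_minus)
  then show "- a - - b \<in> \<int>" by simp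
qed
lift_definition minus_qz :: "qz \<Rightarrow> qz \<Rightarrow> qz" is "(-)"
  unfolding qz_rel_def
proof -
  fix a b c d :: rat assume "a - b \<in> \<int>" "c - d \<in> \<int>"
  then have "(a - b) - (c - d) \<in> \<int>" by (rule Ints_diff)
  then show "a - c - (b - d) \<in> \<int>" by (simp add: algebra_simps)
qed
instance
  by standard (transfer; simp add: qz_rel_def algebra_simps)+
end

fun nmul :: "nat \<Rightarrow> 'a::ab_group_add \<Rightarrow> 'a" where
  "nmul 0 x = 0"
| "nmul (Suc n) x = x + nmul n x"

definition layer :: "nat \<Rightarrow> ('a::ab_group_add) set" where
  "layer k = {x. nmul (2 ^ k) x = 0}"

definition is_2group :: "'a::{ab_group_add,finite} itself \<Rightarrow> bool" where
  "is_2group _ \<longleftrightarrow> (\<forall>x::'a. \<exists>n. nmul (2 ^ n) x = 0)"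

definition symmetric_linking :: "('a::ab_group_add \<Rightarrow> 'a \<Rightarrow> qz) \<Rightarrow> bool" where
  "symmetric_linking lam \<longleftrightarrow>
     (\<forall>x y z. lam (x + y) z = lam x z + lam y z) \<and> (\<forall>x y. lam x y = lam y x)"

definition hom_to_qz :: "('a::ab_group_add \<Rightarrow> qz) set" where
  "hom_to_qz = {f. \<forall>x y. f (x + y) = f x + f y}"

definition nonsingular :: "('a::ab_group_add \<Rightarrow> 'a \<Rightarrow> qz) \<Rightarrow> bool" where
  "nonsingular lam \<longleftrightarrow> bij_betw lam UNIV hom_to_qz"

text \<open>b_k alternating: for x in G_k, b_k(xbar,xbar) = 2^k lam(x,x) mod 2 = 0,
  i.e. 2^(k-1) lam(x,x) = 0 in Q/Z (every element of P_k(G) has a representative in G_k).\<close>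
definition layer_form_alternating :: "('a::ab_group_add \<Rightarrow> 'a \<Rightarrow> qz) \<Rightarrow> nat \<Rightarrow> bool" where
  "layer_form_alternating lam k \<longleftrightarrow>
     (\<forall>x \<in> layer k. nmul (2 ^ (k - 1)) (lam x x) = 0)"

text \<open>q_k evaluated on a representative x of xbar in H_k(G) = G/G_k\<close>
definition qk :: "('a::ab_group_add \<Rightarrow> 'a \<Rightarrow> qz) \<Rightarrow> nat \<Rightarrow> 'a \<Rightarrow> qz" where
  "qk lam k x = nmul (2 ^ (k - 1)) (lam x x)"

end

theory Submission
  imports Defs
begin

lemma nmul_add_arg: "nmul n (a + b) = nmul n a + nmul n (b::'a::ab_group_add)"
  by (induction n) (simp_all add: algebra_simps)

lemma nmul_add_num: "nmul (m + n) (a::'a::ab_group_add) = nmul m a + nmul n a"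
  by (induction m) (simp_all add: algebra_simps)

lemma nmul_zero: "nmul n (0::'a::ab_group_add) = 0"
  by (induction n) simp_all

lemma nmul_hom:
  assumes "\<And>x y. f (x + y) = f x + f y"
  shows "f (nmul n x) = nmul n (f x)"
proof (induction n)
  case 0
  have "f 0 = f 0 + f 0" using assms[of 0 0] by simp
  then show ?case by simp
next
  case (Suc n) then show ?case by (simp add: assms)
qed

theorem proposition5p12:
  fixes lam :: "'a::{ab_group_add,finite} \<Rightarrow> 'a \<Rightarrow> qz" and k :: nat
  assumes "is_2group TYPE('a)"
    and "symmetric_linking lam"
    and "nonsingular lam"
    and "k \<ge> 1"
    and "layer_form_alternating lam k"
  shows "(\<forall>x y. x - y \<in> layer k \<longrightarrow> qk lam k x = qk lam k y)
       \<and> (\<forall>x y. qk lam k (x + y) - qk lam k x - qk lam k y = nmul (2 ^ k) (lam x y))"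
proof -
  have L: "\<And>x y z. lam (x + y) z = lam x z + lam y z" and S: "\<And>x y. lam x y = lam y x"
    using assms(2) unfolding symmetric_linking_def by blast+
  have R: "\<And>x y z. lam z (x + y) = lam z x + lam z y" using L S by metis
  have k2: "(2::nat) ^ k = 2 ^ (k - 1) + 2 ^ (k - 1)"
    using assms(4) by (cases k) auto
  have main: "qk lam k (x + y) - qk lam k x - qk lam k y = nmul (2 ^ k) (lam x y)" for x y
  proof -
    have "lam (x + y) (x + y) = lam x x + lam y y + (lam x y + lam x y)"
      by (simp add: L R S[of y x] algebra_simps)
    then have "qk lam k (x + y) = qk lam k x + qk lam k y + nmul (2 ^ k) (lam x y)"
      unfolding qk_def by (simp add: nmul_add_arg k2 nmul_add_num)
    then show ?thesis by simp
  qed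
  have wd: "qk lam k x = qk lam k y" if "x - y \<in> layer k" for x y
  proof -
    let ?z = "x - y"
    have "qk lam k ?z = 0" using assms(5) that unfolding layer_form_alternating_def qk_def by blast
    moreover have "nmul (2 ^ k) (lam y ?z) = 0"
    proof -
      have "nmul (2 ^ k) (lam y ?z) = lam y (nmul (2 ^ k) ?z)"
        by (rule nmul_hom[symmetric]) (rule R)
      also have "nmul (2 ^ k) ?z = 0" using that unfolding layer_def by simp
      also have "lam y 0 = 0"
      proof -
        have "lam y (0 + 0) = lam y 0 + lam y 0" by (rule R)
        then show ?thesis by simp
      qed
      finally show ?thesis .
    qed
    ultimately show ?thesis using main[of y ?z] by simp
  qed
  show ?thesis using wd main by blast
qed

end
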